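(* Let $n = 3^{n_1}\cdot 4^{n_2}\cdot 5^{n_3}\cdot 7^{n_4}\cdot 8^{n_5}\cdot 11^{n_6}\cdot 23^{n_7}$, where $n_1,\dots,n_7$ are nonnegative integers. Then there exists a quasigroup $(Q,\cdot)$ with $|Q| = n$ satisfying the identity $x\cdot(y\cdot(y\cdot x)) = y$ for all $x,y\in Q$.
   Context: A quasigroup is a set $Q$ with a binary operation $\cdot$ such that for all $a,b\in Q$ each of the equations $a\cdot x = b$ and $y\cdot a = b$ has a unique solution $x\in Q$, resp. $y\in Q$. *)

theory Defs
  imports Main
begin

definition quasigroup :: "'a set \<Rightarrow> ('a \<Rightarrow> 'a \<Rightarrow> 'a) \<Rightarrow> bool" where
  "quasigroup Q op \<longleftrightarrow>
     (\<forall>a\<in>Q. \<forall>b\<in>Q. op a b \<in> Q) \<and>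
     (\<forall>a\<in>Q. \<forall>b\<in>Q. \<exists>!x. x \<in> Q \<and> op a x = b) \<and>
     (\<forall>a\<in>Q. \<forall>b\<in>Q. \<exists>!y. y \<in> Q \<and> op y a = b)"

end

theory Submission
  imports Defs "HOL-Number_Theory.Cong"
begin

definition good :: "'a set \<Rightarrow> ('a \<Rightarrow> 'a \<Rightarrow> 'a) \<Rightarrow> bool" where
  "good Q op \<longleftrightarrow> finite Q \<and> quasigroup Q op \<and> (\<forall>x\<in>Q. \<forall>y\<in>Q. op x (op y (op y x)) = y)"

lemma qg_intro:
  assumes fin: "finite Q" and cl: "\<forall>a\<in>Q. \<forall>b\<in>Q. op a b \<in> Q"
    and li: "\<forall>a\<in>Q. inj_on (op a) Q" and ri: "\<forall>a\<in>Q. inj_on (\<lambda>y. op y a) Q"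
  shows "quasigroup Q op"
proof -
  have l: "op a ` Q = Q" if "a \<in> Q" for a
  proof (rule endo_inj_surj[OF fin])
    show "op a ` Q \<subseteq> Q" using cl that by auto
    show "inj_on (op a) Q" using li that by auto
  qed
  have r: "(\<lambda>y. op y a) ` Q = Q" if "a \<in> Q" for a
  proof (rule endo_inj_surj[OF fin])
    show "(\<lambda>y. op y a) ` Q \<subseteq> Q" using cl that by auto
    show "inj_on (\<lambda>y. op y a) Q" using ri that by auto
  qed
  have A: "\<exists>!x. x \<in> Q \<and> op a x = b" if a: "a \<in> Q" and b: "b \<in> Q" for a b
  proof -
    have "b \<in> op a ` Q" using l[OF a] b by simp
    then obtain x where x: "x \<in> Q" "op a x = b" by auto
    have inj: "inj_on (op a) Q" using li a by auto
    show ?thesis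
    proof (rule ex1I[of _ x])
      show "x \<in> Q \<and> op a x = b" using x by simp
      fix y assume "y \<in> Q \<and> op a y = b"
      then show "y = x" using inj x unfolding inj_on_def by auto
    qed
  qed
  have B: "\<exists>!x. x \<in> Q \<and> op x a = b" if a: "a \<in> Q" and b: "b \<in> Q" for a b
  proof -
    have "b \<in> (\<lambda>y. op y a) ` Q" using r[OF a] b by simp
    then obtain x where x: "x \<in> Q" "op x a = b" by auto
    have inj: "inj_on (\<lambda>y. op y a) Q" using ri a by auto
    show ?thesis
    proof (rule ex1I[of _ x])
      show "x \<in> Q \<and> op x a = b" using x by simp
      fix y assume "y \<in> Q \<and> op y a = b"
      then show "y = x" using inj x unfolding inj_on_def by auto
    qed
  qed
  show ?thesis unfolding quasigroup_def
  proof (intro conjI)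
    show "\<forall>a\<in>Q. \<forall>b\<in>Q. op a b \<in> Q" by (rule cl)
    show "\<forall>a\<in>Q. \<forall>b\<in>Q. \<exists>!x. x \<in> Q \<and> op a x = b" using A by simp
    show "\<forall>a\<in>Q. \<forall>b\<in>Q. \<exists>!y. y \<in> Q \<and> op y a = b" using B by simp
  qed
qed

lemma ex1_uniq: "\<exists>!x. P x \<Longrightarrow> P a \<Longrightarrow> P b \<Longrightarrow> a = b" by blast

lemma qg_inj:
  assumes "quasigroup Q op"
  shows "\<forall>a\<in>Q. \<forall>b\<in>Q. op a b \<in> Q" "\<forall>a\<in>Q. inj_on (op a) Q" "\<forall>a\<in>Q. inj_on (\<lambda>y. op y a) Q"
proof -
  have q: "(\<forall>a\<in>Q. \<forall>b\<in>Q. op a b \<in> Q) \<and> (\<forall>a\<in>Q. \<forall>b\<in>Q. \<exists>!x. x \<in> Q \<and> op a x = b) \<and>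
     (\<forall>a\<in>Q. \<forall>b\<in>Q. \<exists>!y. y \<in> Q \<and> op y a = b)"
    using assms unfolding quasigroup_def .
  note c = conjunct1[OF q] and l = conjunct1[OF conjunct2[OF q]] and r = conjunct2[OF conjunct2[OF q]]
  show "\<forall>a\<in>Q. \<forall>b\<in>Q. op a b \<in> Q" by (rule c)
  show "\<forall>a\<in>Q. inj_on (op a) Q"
  proof (intro ballI inj_onI)
    fix a x y assume "a \<in> Q" "x \<in> Q" "y \<in> Q" "op a x = op a y"
    then have m: "op a x \<in> Q" using c by blast
    have "\<exists>!w. w \<in> Q \<and> op a w = op a x" by (rule bspec[OF bspec[OF l \<open>a \<in> Q\<close>] m])
    then show "x = y" by (rule ex1_uniq) (use \<open>x \<in> Q\<close> \<open>y \<in> Q\<close> \<open>op a x = op a y\<close> in auto)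
  qed
  show "\<forall>a\<in>Q. inj_on (\<lambda>y. op y a) Q"
  proof (intro ballI inj_onI)
    fix a x y assume "a \<in> Q" "x \<in> Q" "y \<in> Q" "op x a = op y a"
    then have m: "op x a \<in> Q" using c by blast
    have "\<exists>!w. w \<in> Q \<and> op w a = op x a" by (rule bspec[OF bspec[OF r \<open>a \<in> Q\<close>] m])
    then show "x = y" by (rule ex1_uniq) (use \<open>x \<in> Q\<close> \<open>y \<in> Q\<close> \<open>op x a = op y a\<close> in auto)
  qed
qed

lemma good_parts:
  assumes "good Q op"
  shows "finite Q" "quasigroup Q op" "\<And>x y. x \<in> Q \<Longrightarrow> y \<in> Q \<Longrightarrow> op x (op y (op y x)) = y"
  using assms unfolding good_def by blast+

lemma good_prod:
  assumes g1: "good Q1 op1" and g2: "good Q2 op2"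
  shows "good (Q1 \<times> Q2) (\<lambda>(a,b) (c,d). (op1 a c, op2 b d))"
proof -
  note p1 = good_parts[OF g1] and p2 = good_parts[OF g2]
  note h1 = qg_inj[OF p1(2)] and h2 = qg_inj[OF p2(2)]
  have fin: "finite (Q1 \<times> Q2)" using p1(1) p2(1) by simp
  have q: "quasigroup (Q1 \<times> Q2) (\<lambda>(a,b) (c,d). (op1 a c, op2 b d))"
  proof (rule qg_intro[OF fin])
    show "\<forall>a\<in>Q1 \<times> Q2. \<forall>b\<in>Q1 \<times> Q2. (\<lambda>(a,b) (c,d). (op1 a c, op2 b d)) a b \<in> Q1 \<times> Q2"
      using h1(1) h2(1) by auto
    show "\<forall>a\<in>Q1 \<times> Q2. inj_on ((\<lambda>(a,b) (c,d). (op1 a c, op2 b d)) a) (Q1 \<times> Q2)"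
      using h1(2) h2(2) unfolding inj_on_def by auto
    show "\<forall>a\<in>Q1 \<times> Q2. inj_on (\<lambda>y. (\<lambda>(a,b) (c,d). (op1 a c, op2 b d)) y a) (Q1 \<times> Q2)"
      using h1(3) h2(3) unfolding inj_on_def by auto
  qed
  have I: "\<forall>x\<in>Q1 \<times> Q2. \<forall>y\<in>Q1 \<times> Q2. (\<lambda>(a,b) (c,d). (op1 a c, op2 b d)) x ((\<lambda>(a,b) (c,d). (op1 a c, op2 b d)) y ((\<lambda>(a,b) (c,d). (op1 a c, op2 b d)) y x)) = y"
    using p1(3) p2(3) by auto
  show ?thesis unfolding good_def using fin q I by (intro conjI)
qed

lemma good_transfer:
  assumes g: "good (Q :: 'a set) op"
  shows "\<exists>(Q' :: nat set) op'. card Q' = card Q \<and> good Q' op'"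
proof -
  have fin: "finite Q" using good_parts[OF g] by simp
  obtain f where f: "bij_betw f Q {0..<card Q}"
    using ex_bij_betw_finite_nat[OF fin] by blast
  define g' where "g' = inv_into Q f"
  have gb: "bij_betw g' {0..<card Q} Q" using f bij_betw_inv_into g'_def by blast
  have gf: "\<And>x. x \<in> Q \<Longrightarrow> g' (f x) = x" using f g'_def bij_betw_inv_into_left by fastforce
  have fg: "\<And>u. u \<in> {0..<card Q} \<Longrightarrow> f (g' u) = u" using f g'_def bij_betw_inv_into_right by fastforce
  have fQ: "\<And>x. x \<in> Q \<Longrightarrow> f x \<in> {0..<card Q}" using f bij_betwE by blast
  have gQ: "\<And>u. u \<in> {0..<card Q} \<Longrightarrow> g' u \<in> Q" using gb bij_betwE by blast
  define op' where "op' u v = f (op (g' u) (g' v))" for u v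
  have qq: "quasigroup Q op" using good_parts[OF g] by simp
  note h = qg_inj[OF qq]
  have gop: "\<And>u v. u \<in> {0..<card Q} \<Longrightarrow> v \<in> {0..<card Q} \<Longrightarrow> g' (op' u v) = op (g' u) (g' v)"
    unfolding op'_def using gf h(1) gQ by blast
  have ginj: "inj_on g' {0..<card Q}" using gb bij_betw_def by blast
  have "good {0..<card Q} op'" unfolding good_def
  proof (intro conjI)
    show "finite {0..<card Q}" by simp
    show "quasigroup {0..<card Q} op'"
    proof (rule qg_intro)
      show "\<forall>a\<in>{0..<card Q}. \<forall>b\<in>{0..<card Q}. op' a b \<in> {0..<card Q}"
        unfolding op'_def using fQ gQ h(1) by blast
      show "\<forall>a\<in>{0..<card Q}. inj_on (op' a) {0..<card Q}"
      proof (intro ballI inj_onI)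
        fix a x y assume a: "a \<in> {0..<card Q}" and x: "x \<in> {0..<card Q}" and y: "y \<in> {0..<card Q}"
          and e: "op' a x = op' a y"
        then have "op (g' a) (g' x) = op (g' a) (g' y)" using gop by metis
        then have "g' x = g' y" using h(2) gQ a x y unfolding inj_on_def by blast
        then show "x = y" using ginj x y unfolding inj_on_def by blast
      qed
      show "\<forall>a\<in>{0..<card Q}. inj_on (\<lambda>y. op' y a) {0..<card Q}"
      proof (intro ballI inj_onI)
        fix a x y assume a: "a \<in> {0..<card Q}" and x: "x \<in> {0..<card Q}" and y: "y \<in> {0..<card Q}"
          and e: "op' x a = op' y a"
        then have "op (g' x) (g' a) = op (g' y) (g' a)" using gop by metis
        then have "g' x = g' y" using h(3) gQ a x y unfolding inj_on_def by blast
        then show "x = y" using ginj x y unfolding inj_on_def by blast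
      qed
    qed simp
    show "\<forall>x\<in>{0..<card Q}. \<forall>y\<in>{0..<card Q}. op' x (op' y (op' y x)) = y"
    proof (intro ballI)
      fix x y assume x: "x \<in> {0..<card Q}" and y: "y \<in> {0..<card Q}"
      have c1: "op' y x \<in> {0..<card Q}" and c2: "op' y (op' y x) \<in> {0..<card Q}"
        unfolding op'_def using fQ gQ h(1) x y by blast+
      have "op' x (op' y (op' y x)) = f (op (g' x) (op (g' y) (op (g' y) (g' x))))"
        unfolding op'_def using gf h(1) gQ x y by simp
      also have "\<dots> = f (g' y)" using good_parts(3)[OF g gQ[OF x] gQ[OF y]] by simp
      also have "\<dots> = y" using fg y by simp
      finally show "op' x (op' y (op' y x)) = y" .
    qed
  qed
  then show ?thesis by (metis card_atLeastLessThan diff_zero)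
qed

definition P :: "nat \<Rightarrow> bool" where
  "P n \<longleftrightarrow> (\<exists>(Q :: nat set) op. card Q = n \<and> good Q op)"

lemma P_mult: "P a \<Longrightarrow> P b \<Longrightarrow> P (a * b)"
proof -
  assume "P a" "P b"
  then obtain Q1 :: "nat set" and op1 Q2 op2 where "card Q1 = a" "good Q1 op1" "card Q2 = b" "good (Q2::nat set) op2"
    unfolding P_def by blast
  then show "P (a*b)" unfolding P_def
    using good_transfer[OF good_prod[of Q1 op1 Q2 op2]] card_cartesian_product by metis
qed

lemma P_one: "P 1"
proof -
  have "good {0::nat} (\<lambda>x y. 0)" unfolding good_def by (auto intro: qg_intro)
  then show ?thesis unfolding P_def by (metis card.empty card_insert_disjoint empty_iff finite.emptyI One_nat_def)
qed

lemma P_pow: "P a \<Longrightarrow> P (a ^ k)"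
proof (induction k)
  case 0
  then show ?case using P_one by simp
next
  case (Suc k)
  then show ?case using P_mult by simp
qed

definition tab_ok :: "nat \<Rightarrow> nat list list \<Rightarrow> bool" where
  "tab_ok m T \<longleftrightarrow> length T = m \<and> (\<forall>r\<in>set T. length r = m \<and> distinct r \<and> (\<forall>z\<in>set r. z < m)) \<and>
     (\<forall>c\<in>set [0..<m]. distinct (map (\<lambda>r. r!c) T)) \<and>
     (\<forall>x\<in>set [0..<m]. \<forall>y\<in>set [0..<m]. T!x!(T!y!(T!y!x)) = y)"

lemma tab_P: assumes "tab_ok m T" shows "P m"
proof -
  let ?op = "\<lambda>x y. T!x!y"
  have L: "length T = m" and R: "\<And>r. r \<in> set T \<Longrightarrow> length r = m \<and> distinct r \<and> (\<forall>z\<in>set r. z < m)"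
    and C: "\<And>c. c < m \<Longrightarrow> distinct (map (\<lambda>r. r!c) T)"
    and I: "\<And>x y. x < m \<Longrightarrow> y < m \<Longrightarrow> T!x!(T!y!(T!y!x)) = y"
    using assms unfolding tab_ok_def by auto
  have row: "\<And>x. x < m \<Longrightarrow> length (T!x) = m \<and> distinct (T!x) \<and> (\<forall>z\<in>set (T!x). z < m)"
    using R L nth_mem by blast
  have cl: "\<forall>a\<in>{0..<m}. \<forall>b\<in>{0..<m}. ?op a b \<in> {0..<m}"
    using row nth_mem by fastforce
  have li: "\<forall>a\<in>{0..<m}. inj_on (?op a) {0..<m}"
  proof (intro ballI inj_onI)
    fix a x y assume a: "a \<in> {0..<m}" and x: "x \<in> {0..<m}" and y: "y \<in> {0..<m}" and e: "T!a!x = T!a!y"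
    have "distinct (T!a)" "length (T!a) = m" using row a by auto
    then show "x = y" using e x y by (auto simp: distinct_conv_nth)
  qed
  have ri: "\<forall>a\<in>{0..<m}. inj_on (\<lambda>y. ?op y a) {0..<m}"
  proof (intro ballI inj_onI)
    fix a x y assume a: "a \<in> {0..<m}" and x: "x \<in> {0..<m}" and y: "y \<in> {0..<m}" and e: "T!x!a = T!y!a"
    have "distinct (map (\<lambda>r. r!a) T)" using C a by auto
    then show "x = y" using e x y L by (auto simp: distinct_conv_nth)
  qed
  have "good {0..<m} ?op" unfolding good_def by (intro conjI qg_intro[OF _ cl li ri]) (use I in auto)
  then show ?thesis unfolding P_def by (metis card_atLeastLessThan diff_zero)
qed


lemma lin_P:
  fixes p a b :: nat
  assumes p: "1 < p" and ca: "coprime a p" and cb: "coprime b p"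
    and c1: "[a + b^3 = 0] (mod p)" and c2: "[a*b + a*b^2 = 1] (mod p)"
  shows "P p"
proof -
  let ?op = "\<lambda>x y. (a*x + b*y) mod p"
  have cl: "\<forall>x\<in>{0..<p}. \<forall>y\<in>{0..<p}. ?op x y \<in> {0..<p}" using p by auto
  have li: "\<forall>x\<in>{0..<p}. inj_on (?op x) {0..<p}"
  proof (intro ballI inj_onI)
    fix x y z assume "x \<in> {0..<p}" "y \<in> {0..<p}" "z \<in> {0..<p}" "?op x y = ?op x z"
    then have "[a*x + b*y = a*x + b*z] (mod p)" by (simp add: cong_def)
    then have "[y = z] (mod p)" using cb by (simp add: cong_add_lcancel_nat cong_mult_lcancel_nat)
    then show "y = z" using \<open>y \<in> {0..<p}\<close> \<open>z \<in> {0..<p}\<close> cong_less_modulus_unique_nat by auto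
  qed
  have ri: "\<forall>x\<in>{0..<p}. inj_on (\<lambda>y. ?op y x) {0..<p}"
  proof (intro ballI inj_onI)
    fix x y z assume "x \<in> {0..<p}" "y \<in> {0..<p}" "z \<in> {0..<p}" "?op y x = ?op z x"
    then have "[a*y + b*x = a*z + b*x] (mod p)" by (simp add: cong_def)
    then have "[y = z] (mod p)" using ca by (simp add: cong_add_rcancel_nat cong_mult_lcancel_nat)
    then show "y = z" using \<open>y \<in> {0..<p}\<close> \<open>z \<in> {0..<p}\<close> cong_less_modulus_unique_nat by auto
  qed
  have I: "?op x (?op y (?op y x)) = y" if y: "y < p" for x y
  proof -
    have M: "[t mod p = t] (mod p)" for t by (simp add: cong_def)
    have h1: "[?op y x = a*y+b*x] (mod p)" by (rule M)
    have h2: "[?op y (?op y x) = a*y + b*(a*y+b*x)] (mod p)"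
      by (rule cong_trans[OF M cong_add[OF cong_refl cong_mult[OF cong_refl h1]]])
    have h3: "[?op x (?op y (?op y x)) = a*x + b*(a*y + b*(a*y+b*x))] (mod p)"
      by (rule cong_trans[OF M cong_add[OF cong_refl cong_mult[OF cong_refl h2]]])
    have "?op x (?op y (?op y x)) = (a*x + b*(a*y + b*(a*y+b*x))) mod p"
      using h3 by (simp add: cong_def)
    also have "a*x + b*(a*y + b*(a*y+b*x)) = (a + b^3)*x + (a*b + a*b^2)*y"
      by (simp add: algebra_simps power2_eq_square power3_eq_cube)
    finally have e: "?op x (?op y (?op y x)) = ((a + b^3)*x + (a*b + a*b^2)*y) mod p" .
    have "[(a + b^3)*x + (a*b + a*b^2)*y = 0*x + 1*y] (mod p)"
      by (rule cong_add[OF cong_mult[OF c1 cong_refl] cong_mult[OF c2 cong_refl]])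
    then have "[?op x (?op y (?op y x)) = y] (mod p)" using e by (simp add: cong_def)
    moreover have "?op x (?op y (?op y x)) < p" using p by simp
    ultimately show ?thesis using y cong_less_modulus_unique_nat by blast
  qed
  have "good {0..<p} ?op" unfolding good_def by (intro conjI qg_intro[OF _ cl li ri]) (use I in auto)
  then show ?thesis unfolding P_def by (metis card_atLeastLessThan diff_zero)
qed

lemma copr: fixes a m u v :: nat assumes "a*u = m*v + 1" shows "coprime a m"
proof (rule coprimeI)
  fix c assume "c dvd a" "c dvd m"
  then have "c dvd a*u" "c dvd m*v" by auto
  then have "c dvd 1" using assms by (metis dvd_add_right_iff)
  then show "is_unit c" by simp
qed

lemma P3: "P 3" by (rule lin_P[of 3 2 1]) (auto simp: cong_def intro: copr[of _ 2 _ 1] copr[of _ 1 _ 0])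
lemma P5: "P 5" by (rule lin_P[of 5 3 3]) (auto simp: cong_def intro: copr[of _ 2 _ 1] copr[of _ 2 _ 1])
lemma P7: "P 7" by (rule lin_P[of 7 6 2]) (auto simp: cong_def intro: copr[of _ 6 _ 5] copr[of _ 4 _ 1])
lemma P11: "P 11" by (rule lin_P[of 11 7 5]) (auto simp: cong_def intro: copr[of _ 8 _ 5] copr[of _ 9 _ 4])
lemma P23: "P 23" by (rule lin_P[of 23 11 13]) (auto simp: cong_def intro: copr[of _ 21 _ 10] copr[of _ 16 _ 9])

definition T4 :: "nat list list" where "T4 = [[0,2,3,1],[1,3,2,0],[2,0,1,3],[3,1,0,2]]"
definition T8 :: "nat list list" where "T8 = [[0,2,4,6,3,1,7,5],[3,1,7,5,0,2,4,6],[6,4,2,0,5,7,1,3],[5,7,1,3,6,4,2,0],[7,5,3,1,4,6,0,2],[4,6,0,2,7,5,3,1],[1,3,5,7,2,0,6,4],[2,0,6,4,1,3,5,7]]"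

lemma P4: "P 4" by (rule tab_P[of _ T4]) (unfold tab_ok_def T4_def, code_simp)
lemma P8: "P 8" by (rule tab_P[of _ T8]) (unfold tab_ok_def T8_def, code_simp)

theorem mainTheorem1:
  fixes n1 n2 n3 n4 n5 n6 n7 n :: nat
  assumes "n = 3^n1 * 4^n2 * 5^n3 * 7^n4 * 8^n5 * 11^n6 * 23^n7"
  shows "\<exists>(Q :: nat set) (op :: nat \<Rightarrow> nat \<Rightarrow> nat).
           finite Q \<and> card Q = n \<and> quasigroup Q op \<and>
           (\<forall>x\<in>Q. \<forall>y\<in>Q. op x (op y (op y x)) = y)"
proof -
  have "P n" unfolding assms
    by (intro P_mult P_pow P3 P4 P5 P7 P8 P11 P23)
  then obtain Q :: "nat set" and op where "card Q = n" "good Q op" unfolding P_def by blast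
  then show ?thesis using good_parts[of Q op] by blast
qed

end
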